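(* Let $X\neq\emptyset$ be a set, $\Phi$ a nonempty set of bounded functions $X\to\mathbb{R}$ that is compact with respect to $D_\Phi$, and $G$ a subgroup of $\mathrm{Homeo}_\Phi(X)$. If $G$ is complete with respect to the pseudo-metric $D_G$, then $G$ is compact with respect to $D_G$.
   Context: $D_\Phi(\varphi_1,\varphi_2):=\|\varphi_1-\varphi_2\|_\infty$. $D_X(x_1,x_2):=\sup_{\varphi\in\Phi}|\varphi(x_1)-\varphi(x_2)|$. $\mathrm{Homeo}_\Phi(X)$ is the group of bijections $g:X\to X$ that are homeomorphisms for the topology of $D_X$ and satisfy $\varphi\circ g\in\Phi$ and $\varphi\circ g^{-1}\in\Phi$ for all $\varphi\in\Phi$. For $g_1,g_2\in G$, $D_G(g_1,g_2):=\sup_{\varphi\in\Phi}D_\Phi(\varphi\circ g_1,\varphi\circ g_2)$. *)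

theory Defs
  imports "HOL-Analysis.Analysis"
begin

definition pmtop :: "'b set \<Rightarrow> ('b \<Rightarrow> 'b \<Rightarrow> real) \<Rightarrow> 'b topology" where
  "pmtop S d = topology (\<lambda>U. U \<subseteq> S \<and> (\<forall>x\<in>U. \<exists>r>0. \<forall>y\<in>S. d x y < r \<longrightarrow> y \<in> U))"

definition pcomplete :: "'b set \<Rightarrow> ('b \<Rightarrow> 'b \<Rightarrow> real) \<Rightarrow> bool" where
  "pcomplete S d \<longleftrightarrow>
     (\<forall>\<sigma>::nat \<Rightarrow> 'b. range \<sigma> \<subseteq> S \<and> (\<forall>e>0. \<exists>N. \<forall>m\<ge>N. \<forall>n\<ge>N. d (\<sigma> m) (\<sigma> n) < e)
        \<longrightarrow> (\<exists>x\<in>S. (\<lambda>n. d (\<sigma> n) x) \<longlonglongrightarrow> 0))"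

definition DPhi :: "('a \<Rightarrow> real) \<Rightarrow> ('a \<Rightarrow> real) \<Rightarrow> real" where
  "DPhi f g = (SUP x. \<bar>f x - g x\<bar>)"

definition DX :: "('a \<Rightarrow> real) set \<Rightarrow> 'a \<Rightarrow> 'a \<Rightarrow> real" where
  "DX Phi x1 x2 = (SUP \<phi>\<in>Phi. \<bar>\<phi> x1 - \<phi> x2\<bar>)"

definition DG :: "('a \<Rightarrow> real) set \<Rightarrow> ('a \<Rightarrow> 'a) \<Rightarrow> ('a \<Rightarrow> 'a) \<Rightarrow> real" where
  "DG Phi g1 g2 = (SUP \<phi>\<in>Phi. DPhi (\<phi> \<circ> g1) (\<phi> \<circ> g2))"

definition HomeoPhi :: "('a \<Rightarrow> real) set \<Rightarrow> ('a \<Rightarrow> 'a) set" where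
  "HomeoPhi Phi = {g. bij g \<and>
      homeomorphic_map (pmtop UNIV (DX Phi)) (pmtop UNIV (DX Phi)) g \<and>
      (\<forall>\<phi>\<in>Phi. \<phi> \<circ> g \<in> Phi \<and> \<phi> \<circ> inv g \<in> Phi)}"

definition subgroup_of :: "('a \<Rightarrow> 'a) set \<Rightarrow> ('a \<Rightarrow> 'a) set \<Rightarrow> bool" where
  "subgroup_of G H \<longleftrightarrow> G \<subseteq> H \<and> id \<in> G \<and>
     (\<forall>g\<in>G. \<forall>h\<in>G. g \<circ> h \<in> G) \<and> (\<forall>g\<in>G. inv g \<in> G)"

end

theory Submission imports Defs begin

lemma openin_pmtop:
  "openin (pmtop S d) U \<longleftrightarrow> U \<subseteq> S \<and> (\<forall>x\<in>U. \<exists>r>0. \<forall>y\<in>S. d x y < r \<longrightarrow> y \<in> U)"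
proof -
  have "istopology (\<lambda>U. U \<subseteq> S \<and> (\<forall>x\<in>U. \<exists>r>0. \<forall>y\<in>S. d x y < r \<longrightarrow> y \<in> U))"
    unfolding istopology_def
  proof (rule conjI; intro allI impI)
    fix A B assume A: "A \<subseteq> S \<and> (\<forall>x\<in>A. \<exists>r>0. \<forall>y\<in>S. d x y < r \<longrightarrow> y \<in> A)"
      and B: "B \<subseteq> S \<and> (\<forall>x\<in>B. \<exists>r>0. \<forall>y\<in>S. d x y < r \<longrightarrow> y \<in> B)"
    show "A \<inter> B \<subseteq> S \<and> (\<forall>x\<in>A \<inter> B. \<exists>r>0. \<forall>y\<in>S. d x y < r \<longrightarrow> y \<in> A \<inter> B)"
    proof (intro conjI ballI)
      show "A \<inter> B \<subseteq> S" using A by blast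
    next
      fix x assume "x \<in> A \<inter> B"
      then obtain r1 r2 where "r1 > 0" "\<forall>y\<in>S. d x y < r1 \<longrightarrow> y \<in> A" "r2 > 0" "\<forall>y\<in>S. d x y < r2 \<longrightarrow> y \<in> B"
        using A B by blast
      then have "min r1 r2 > 0 \<and> (\<forall>y\<in>S. d x y < min r1 r2 \<longrightarrow> y \<in> A \<inter> B)" by auto
      then show "\<exists>r>0. \<forall>y\<in>S. d x y < r \<longrightarrow> y \<in> A \<inter> B" by blast
    qed
  next
    fix K assume K: "\<forall>A\<in>K. A \<subseteq> S \<and> (\<forall>x\<in>A. \<exists>r>0. \<forall>y\<in>S. d x y < r \<longrightarrow> y \<in> A)"
    then show "\<Union>K \<subseteq> S \<and> (\<forall>x\<in>\<Union>K. \<exists>r>0. \<forall>y\<in>S. d x y < r \<longrightarrow> y \<in> \<Union>K)"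
    proof (intro conjI ballI)
      show "\<Union>K \<subseteq> S" using K by blast
    next
      fix x assume "x \<in> \<Union>K"
      then obtain A where "A \<in> K" "x \<in> A" by blast
      then obtain r where "r > 0" "\<forall>y\<in>S. d x y < r \<longrightarrow> y \<in> A" using K by blast
      then show "\<exists>r>0. \<forall>y\<in>S. d x y < r \<longrightarrow> y \<in> \<Union>K" using \<open>A \<in> K\<close> by blast
    qed
  qed
  then show ?thesis unfolding pmtop_def by simp
qed

lemma bnd_abs: "bounded (range (f::'a\<Rightarrow>real)) \<Longrightarrow> \<exists>B. \<forall>x. \<bar>f x\<bar> \<le> B"
  unfolding bounded_iff by auto

lemma dphi_ge:
  assumes "bounded (range f)" "bounded (range g)"
  shows "\<bar>f x - g x\<bar> \<le> DPhi f g"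
proof -
  obtain Bf Bg where "\<forall>x. \<bar>f x\<bar> \<le> Bf" "\<forall>x. \<bar>g x\<bar> \<le> Bg" using assms bnd_abs by metis
  then have "\<forall>x. \<bar>f x - g x\<bar> \<le> Bf + Bg"
    by (metis abs_triangle_ineq4 add_mono order_trans)
  then have "bdd_above (range (\<lambda>x. \<bar>f x - g x\<bar>))"
    by (intro bdd_aboveI2) auto
  then show ?thesis unfolding DPhi_def by (rule cSUP_upper[OF UNIV_I])
qed

lemma dphi_le: "(\<And>x. \<bar>f x - g x\<bar> \<le> c) \<Longrightarrow> DPhi f g \<le> c"
  unfolding DPhi_def by (rule cSUP_least) auto

lemma dphi_refl: "DPhi f f = 0"
  unfolding DPhi_def by simp

lemma dphi_sym: "DPhi f g = DPhi g f"
  unfolding DPhi_def by (simp add: abs_minus_commute)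

lemma dphi_nonneg: "bounded (range f) \<Longrightarrow> bounded (range g) \<Longrightarrow> 0 \<le> DPhi f g"
  using dphi_ge[of f g undefined] by linarith

lemma dphi_tri:
  assumes "bounded (range f)" "bounded (range g)" "bounded (range h)"
  shows "DPhi f h \<le> DPhi f g + DPhi g h"
proof (rule dphi_le)
  fix x
  have "\<bar>f x - g x\<bar> \<le> DPhi f g" "\<bar>g x - h x\<bar> \<le> DPhi g h" using dphi_ge assms by auto
  then show "\<bar>f x - h x\<bar> \<le> DPhi f g + DPhi g h" by linarith
qed

lemma dphi_comp:
  assumes "bounded (range f)" "bounded (range g)"
  shows "DPhi (f \<circ> k) (g \<circ> k) \<le> DPhi f g"
  by (rule dphi_le) (simp add: dphi_ge assms)

lemma dphi_zero:
  assumes "bounded (range f)" "bounded (range g)" "DPhi f g \<le> 0"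
  shows "f = g"
proof
  fix x show "f x = g x" using dphi_ge[OF assms(1,2), of x] assms(3) by linarith
qed

locale setting =
  fixes Phi :: "('a \<Rightarrow> real) set" and G :: "('a \<Rightarrow> 'a) set"
  assumes ne: "Phi \<noteq> {}" and bnd: "\<forall>\<phi>\<in>Phi. bounded (range \<phi>)"
    and cpt: "compactin (pmtop Phi DPhi) Phi" and sg: "subgroup_of G (HomeoPhi Phi)"
    and cmpl: "pcomplete G (DG Phi)"
begin

lemma bdd: "\<phi> \<in> Phi \<Longrightarrow> bounded (range \<phi>)"
  using bnd by blast

lemma comp_in: "g \<in> G \<Longrightarrow> \<phi> \<in> Phi \<Longrightarrow> \<phi> \<circ> g \<in> Phi"
  using sg unfolding subgroup_of_def HomeoPhi_def by blast

lemma net: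
  assumes "\<delta> > 0"
  shows "\<exists>F. finite F \<and> F \<subseteq> Phi \<and> (\<forall>\<phi>\<in>Phi. \<exists>\<psi>\<in>F. DPhi \<psi> \<phi> < \<delta>)"
proof -
  define U where "U = (\<lambda>\<psi>. {\<phi>\<in>Phi. DPhi \<psi> \<phi> < \<delta>}) ` Phi"
  have op: "\<forall>V\<in>U. openin (pmtop Phi DPhi) V"
  proof
    fix V assume "V \<in> U"
    then obtain \<psi> where \<psi>: "\<psi> \<in> Phi" "V = {\<phi>\<in>Phi. DPhi \<psi> \<phi> < \<delta>}" unfolding U_def by blast
    show "openin (pmtop Phi DPhi) V"
      unfolding openin_pmtop
    proof (intro conjI ballI)
      show "V \<subseteq> Phi" using \<psi> by blast
    next
      fix x assume x: "x \<in> V"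
      show "\<exists>r>0. \<forall>y\<in>Phi. DPhi x y < r \<longrightarrow> y \<in> V"
      proof (intro exI[of _ "\<delta> - DPhi \<psi> x"] conjI ballI impI)
        show "\<delta> - DPhi \<psi> x > 0" using x \<psi> by auto
      next
        fix y assume y: "y \<in> Phi" "DPhi x y < \<delta> - DPhi \<psi> x"
        have xP: "x \<in> Phi" using x \<psi> by blast
        have "DPhi \<psi> y \<le> DPhi \<psi> x + DPhi x y"
          by (rule dphi_tri[OF bdd[OF \<psi>(1)] bdd[OF xP] bdd[OF y(1)]])
        then show "y \<in> V" using y \<psi> by auto
      qed
    qed
  qed
  have cov: "Phi \<subseteq> \<Union>U" unfolding U_def using assms by (auto simp: dphi_refl)
  have "\<exists>FF. finite FF \<and> FF \<subseteq> U \<and> Phi \<subseteq> \<Union>FF"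
    using conjunct2[OF cpt[unfolded compactin_def]] op cov by simp
  then obtain FF where FF: "finite FF" "FF \<subseteq> U" "Phi \<subseteq> \<Union>FF" by blast
  obtain F where F: "F \<subseteq> Phi" "finite F" "FF = (\<lambda>\<psi>. {\<phi>\<in>Phi. DPhi \<psi> \<phi> < \<delta>}) ` F"
    using finite_subset_image[OF FF(1) FF(2)[unfolded U_def]] by blast
  have "\<forall>\<phi>\<in>Phi. \<exists>\<psi>\<in>F. DPhi \<psi> \<phi> < \<delta>"
  proof
    fix \<phi> assume "\<phi> \<in> Phi"
    then obtain V where "V \<in> FF" "\<phi> \<in> V" using FF(3) by blast
    then obtain \<psi> where "\<psi> \<in> F" "V = {\<phi>\<in>Phi. DPhi \<psi> \<phi> < \<delta>}" using F(3) by blast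
    then show "\<exists>\<psi>\<in>F. DPhi \<psi> \<phi> < \<delta>" using \<open>\<phi> \<in> V\<close> by blast
  qed
  then show ?thesis using F(1,2) by blast
qed

lemma unif: "\<exists>B. \<forall>\<phi>\<in>Phi. \<forall>x. \<bar>\<phi> x\<bar> \<le> B"
proof -
  obtain F where F: "finite F" "F \<subseteq> Phi" "\<forall>\<phi>\<in>Phi. \<exists>\<psi>\<in>F. DPhi \<psi> \<phi> < 1"
    using net[of 1] by (meson zero_less_one)
  have "\<forall>\<psi>\<in>F. bounded (range \<psi>)" using F(2) bdd by (simp add: subset_iff)
  then have "bounded (\<Union>\<psi>\<in>F. range \<psi>)" by (rule bounded_UN[OF F(1)])
  then obtain B0 where B0: "\<forall>y\<in>(\<Union>\<psi>\<in>F. range \<psi>). norm y \<le> B0" unfolding bounded_iff by blast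
  have "\<forall>\<phi>\<in>Phi. \<forall>x. \<bar>\<phi> x\<bar> \<le> B0 + 1"
  proof (intro ballI allI)
    fix \<phi> x assume p: "\<phi> \<in> Phi"
    then obtain \<psi> where \<psi>: "\<psi> \<in> F" "DPhi \<psi> \<phi> < 1" using F(3) by blast
    have pP: "\<psi> \<in> Phi" by (rule subsetD[OF F(2) \<psi>(1)])
    have "\<bar>\<psi> x - \<phi> x\<bar> \<le> DPhi \<psi> \<phi>" by (rule dphi_ge[OF bdd[OF pP] bdd[OF p]])
    moreover have "\<bar>\<psi> x\<bar> \<le> B0" using B0 \<psi>(1) by simp
    ultimately show "\<bar>\<phi> x\<bar> \<le> B0 + 1" using \<psi>(2) by linarith
  qed
  then show ?thesis by blast
qed

definition B where "B = (SOME B. \<forall>\<phi>\<in>Phi. \<forall>x. \<bar>\<phi> x\<bar> \<le> B)"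

lemma B: "\<phi> \<in> Phi \<Longrightarrow> \<bar>\<phi> x\<bar> \<le> B"
  using someI_ex[OF unif] unfolding B_def by blast

lemma dphi_bnd: "f \<in> Phi \<Longrightarrow> g \<in> Phi \<Longrightarrow> DPhi f g \<le> 2 * B"
  by (rule dphi_le) (metis B abs_triangle_ineq4 add_mono mult_2 order_trans)

lemma dg_ge:
  assumes "g1 \<in> G" "g2 \<in> G" "\<phi> \<in> Phi"
  shows "DPhi (\<phi> \<circ> g1) (\<phi> \<circ> g2) \<le> DG Phi g1 g2"
proof -
  have "bdd_above ((\<lambda>\<phi>. DPhi (\<phi> \<circ> g1) (\<phi> \<circ> g2)) ` Phi)"
    by (rule bdd_aboveI2) (use dphi_bnd comp_in assms in blast)
  then show ?thesis unfolding DG_def by (rule cSUP_upper[OF assms(3)])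
qed

lemma dg_le: "(\<And>\<phi>. \<phi> \<in> Phi \<Longrightarrow> DPhi (\<phi> \<circ> g1) (\<phi> \<circ> g2) \<le> c) \<Longrightarrow> DG Phi g1 g2 \<le> c"
  unfolding DG_def by (rule cSUP_least) (use ne in auto)

lemma dg_nonneg: "g1 \<in> G \<Longrightarrow> g2 \<in> G \<Longrightarrow> 0 \<le> DG Phi g1 g2"
proof -
  assume a: "g1 \<in> G" "g2 \<in> G"
  obtain \<phi> where "\<phi> \<in> Phi" using ne by blast
  then show ?thesis
    using dg_ge[OF a \<open>\<phi> \<in> Phi\<close>] dphi_nonneg[OF bdd[OF comp_in[OF a(1) \<open>\<phi> \<in> Phi\<close>]] bdd[OF comp_in[OF a(2) \<open>\<phi> \<in> Phi\<close>]]]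
    by linarith
qed

lemma dg_sym: "DG Phi g1 g2 = DG Phi g2 g1"
  unfolding DG_def by (rule SUP_cong[OF refl], rule dphi_sym)

lemma dg_tri:
  assumes "g1 \<in> G" "g2 \<in> G" "g3 \<in> G"
  shows "DG Phi g1 g3 \<le> DG Phi g1 g2 + DG Phi g2 g3"
proof (rule dg_le)
  fix \<phi> assume p: "\<phi> \<in> Phi"
  have "DPhi (\<phi> \<circ> g1) (\<phi> \<circ> g3) \<le> DPhi (\<phi> \<circ> g1) (\<phi> \<circ> g2) + DPhi (\<phi> \<circ> g2) (\<phi> \<circ> g3)"
    by (rule dphi_tri[OF bdd[OF comp_in[OF assms(1) p]] bdd[OF comp_in[OF assms(2) p]] bdd[OF comp_in[OF assms(3) p]]])
  also have "\<dots> \<le> DG Phi g1 g2 + DG Phi g2 g3"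
    by (rule add_mono[OF dg_ge[OF assms(1,2) p] dg_ge[OF assms(2,3) p]])
  finally show "DPhi (\<phi> \<circ> g1) (\<phi> \<circ> g3) \<le> DG Phi g1 g2 + DG Phi g2 g3" .
qed

definition psi where "psi g = restrict (\<lambda>\<phi>. \<phi> \<circ> g) Phi"
definition M where "M = psi ` G"
definition dq where
  "dq a b = (if a \<in> M \<and> b \<in> M then (SUP \<phi>\<in>Phi. DPhi (a \<phi>) (b \<phi>)) else 0)"

lemma dq_psi:
  assumes "g1 \<in> G" "g2 \<in> G" shows "dq (psi g1) (psi g2) = DG Phi g1 g2"
proof -
  have "psi g1 \<in> M" "psi g2 \<in> M" using assms unfolding M_def by blast+
  then have "dq (psi g1) (psi g2) = (SUP \<phi>\<in>Phi. DPhi (psi g1 \<phi>) (psi g2 \<phi>))"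
    unfolding dq_def by simp
  also have "\<dots> = DG Phi g1 g2" unfolding DG_def
    by (rule SUP_cong) (simp_all add: psi_def)
  finally show ?thesis .
qed

lemma psi_eq:
  assumes "g1 \<in> G" "g2 \<in> G"
  shows "psi g1 = psi g2 \<longleftrightarrow> DG Phi g1 g2 = 0"
proof
  assume e: "psi g1 = psi g2"
  have "DG Phi g1 g2 \<le> 0"
  proof (rule dg_le)
    fix \<phi> assume "\<phi> \<in> Phi"
    then have "\<phi> \<circ> g1 = \<phi> \<circ> g2" using fun_cong[OF e, of \<phi>] unfolding psi_def by simp
    then show "DPhi (\<phi> \<circ> g1) (\<phi> \<circ> g2) \<le> 0" by (simp add: dphi_refl)
  qed
  then show "DG Phi g1 g2 = 0" using dg_nonneg[OF assms] by linarith
next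
  assume z: "DG Phi g1 g2 = 0"
  show "psi g1 = psi g2"
  proof
    fix \<phi>
    show "psi g1 \<phi> = psi g2 \<phi>"
    proof (cases "\<phi> \<in> Phi")
      case True
      then have "DPhi (\<phi> \<circ> g1) (\<phi> \<circ> g2) \<le> 0" using dg_ge[OF assms True] z by simp
      then have "\<phi> \<circ> g1 = \<phi> \<circ> g2"
        by (rule dphi_zero[OF bdd[OF comp_in[OF assms(1) True]] bdd[OF comp_in[OF assms(2) True]]])
      then show ?thesis using True unfolding psi_def by simp
    next
      case False
      then show ?thesis unfolding psi_def by simp
    qed
  qed
qed

lemma metric: "Metric_space M dq"
proof
  fix x y
  show "0 \<le> dq x y"
  proof (cases "x \<in> M \<and> y \<in> M")
    case True
    then obtain g1 g2 where "g1 \<in> G" "g2 \<in> G" "x = psi g1" "y = psi g2" unfolding M_def by blast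
    then show ?thesis using dq_psi dg_nonneg by simp
  next
    case False
    then show ?thesis unfolding dq_def by auto
  qed
  have "(SUP \<phi>\<in>Phi. DPhi (x \<phi>) (y \<phi>)) = (SUP \<phi>\<in>Phi. DPhi (y \<phi>) (x \<phi>))"
    by (rule SUP_cong[OF refl], rule dphi_sym)
  then show "dq x y = dq y x"
    unfolding dq_def by (simp add: conj_commute)
next
  fix x y assume "x \<in> M" "y \<in> M"
  then obtain g1 g2 where "g1 \<in> G" "g2 \<in> G" "x = psi g1" "y = psi g2" unfolding M_def by blast
  then show "dq x y = 0 \<longleftrightarrow> x = y" using dq_psi psi_eq by simp
next
  fix x y z assume "x \<in> M" "y \<in> M" "z \<in> M"
  then obtain g1 g2 g3 where "g1 \<in> G" "g2 \<in> G" "g3 \<in> G" "x = psi g1" "y = psi g2" "z = psi g3"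
    unfolding M_def by blast
  then show "dq x z \<le> dq x y + dq y z" using dq_psi dg_tri by simp
qed

end


sublocale setting \<subseteq> Q: Metric_space "M" "dq"
  by (rule metric)

context setting
begin

lemma complete: "Q.mcomplete"
  unfolding Q.mcomplete_def Q.MCauchy_def
proof (intro allI impI)
  fix \<sigma> :: "nat \<Rightarrow> (('a \<Rightarrow> real) \<Rightarrow> ('a \<Rightarrow> real))" assume a: "range \<sigma> \<subseteq> M \<and> (\<forall>\<epsilon>>0. \<exists>N. \<forall>n n'. N \<le> n \<longrightarrow> N \<le> n' \<longrightarrow> dq (\<sigma> n) (\<sigma> n') < \<epsilon>)"
  define \<tau> where "\<tau> n = (SOME g. g \<in> G \<and> psi g = \<sigma> n)" for n
  have \<tau>: "\<tau> n \<in> G \<and> psi (\<tau> n) = \<sigma> n" for n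
  proof -
    have "\<sigma> n \<in> psi ` G" using a unfolding M_def by (simp add: image_subset_iff)
    then have "\<exists>g. g \<in> G \<and> psi g = \<sigma> n" by (metis imageE)
    then show ?thesis unfolding \<tau>_def by (rule someI_ex)
  qed
  have dd: "DG Phi (\<tau> m) (\<tau> n) = dq (\<sigma> m) (\<sigma> n)" for m n
    using dq_psi[of "\<tau> m" "\<tau> n"] \<tau>[of m] \<tau>[of n] by simp
  have "range \<tau> \<subseteq> G" using \<tau> by (simp add: image_subset_iff)
  moreover have "\<forall>e>0. \<exists>N. \<forall>m\<ge>N. \<forall>n\<ge>N. DG Phi (\<tau> m) (\<tau> n) < e"
  proof (intro allI impI)
    fix e :: real assume "e > 0"
    then obtain N where N: "\<forall>n n'. N \<le> n \<longrightarrow> N \<le> n' \<longrightarrow> dq (\<sigma> n) (\<sigma> n') < e" using a by blast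
    then show "\<exists>N. \<forall>m\<ge>N. \<forall>n\<ge>N. DG Phi (\<tau> m) (\<tau> n) < e" unfolding dd by blast
  qed
  ultimately have "range \<tau> \<subseteq> G \<and> (\<forall>e>0. \<exists>N. \<forall>m\<ge>N. \<forall>n\<ge>N. DG Phi (\<tau> m) (\<tau> n) < e)"
    by (rule conjI)
  then have "\<exists>x\<in>G. (\<lambda>n. DG Phi (\<tau> n) x) \<longlonglongrightarrow> 0"
    using cmpl unfolding pcomplete_def by (rule_tac mp[OF spec[of _ \<tau>]])
  then obtain x where x: "x \<in> G" "(\<lambda>n. DG Phi (\<tau> n) x) \<longlonglongrightarrow> 0" by blast
  have "limitin Q.mtopology \<sigma> (psi x) sequentially"
    unfolding Q.limitin_metric
  proof (intro conjI allI impI)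
    show "psi x \<in> M" using x unfolding M_def by blast
  next
    fix e :: real assume "e > 0"
    then have "eventually (\<lambda>n. DG Phi (\<tau> n) x < e) sequentially"
      using order_tendstoD(2)[OF x(2)] by blast
    then show "eventually (\<lambda>n. \<sigma> n \<in> M \<and> dq (\<sigma> n) (psi x) < e) sequentially"
    proof eventually_elim
      case (elim n)
      have "\<sigma> n \<in> M" using a by (simp add: image_subset_iff)
      moreover have "dq (\<sigma> n) (psi x) = DG Phi (\<tau> n) x"
        using dq_psi[of "\<tau> n" x] \<tau>[of n] x(1) by simp
      ultimately show ?case using elim by simp
    qed
  qed
  then show "\<exists>x. limitin Q.mtopology \<sigma> x sequentially" by blast
qed

lemma tb: "Q.mtotally_bounded M"
  unfolding Q.mtotally_bounded_def
proof (intro allI impI)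
  fix \<epsilon> :: real assume "\<epsilon> > 0"
  define \<delta> where "\<delta> = \<epsilon> / 5"
  have "\<delta> > 0" using \<open>\<epsilon> > 0\<close> unfolding \<delta>_def by simp
  obtain F where F: "finite F" "F \<subseteq> Phi" "\<forall>\<phi>\<in>Phi. \<exists>\<psi>\<in>F. DPhi \<psi> \<phi> < \<delta>"
    using net[OF \<open>\<delta> > 0\<close>] by blast
  define key where "key g = (\<lambda>\<phi>\<in>F. SOME \<phi>'. \<phi>' \<in> F \<and> DPhi \<phi>' (\<phi> \<circ> g) < \<delta>)" for g
  have key: "key g \<phi> \<in> F \<and> DPhi (key g \<phi>) (\<phi> \<circ> g) < \<delta>" if "g \<in> G" "\<phi> \<in> F" for g \<phi>
  proof -
    have "\<phi> \<circ> g \<in> Phi" using comp_in[OF that(1) subsetD[OF F(2) that(2)]] .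
    then have "\<exists>\<phi>'\<in>F. DPhi \<phi>' (\<phi> \<circ> g) < \<delta>" using F(3) by blast
    then have "\<exists>\<phi>'. \<phi>' \<in> F \<and> DPhi \<phi>' (\<phi> \<circ> g) < \<delta>" by blast
    then have "(SOME \<phi>'. \<phi>' \<in> F \<and> DPhi \<phi>' (\<phi> \<circ> g) < \<delta>) \<in> F \<and>
        DPhi (SOME \<phi>'. \<phi>' \<in> F \<and> DPhi \<phi>' (\<phi> \<circ> g) < \<delta>) (\<phi> \<circ> g) < \<delta>"
      by (rule someI_ex)
    then show ?thesis unfolding key_def using that(2) by simp
  qed
  have keyE: "key g \<in> F \<rightarrow>\<^sub>E F" if "g \<in> G" for g
    using key that unfolding key_def by (auto simp: PiE_def)
  define rep where "rep k = (SOME g. g \<in> G \<and> key g = k)" for k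
  have rep: "rep (key g) \<in> G \<and> key (rep (key g)) = key g" if "g \<in> G" for g
  proof -
    have "\<exists>h. h \<in> G \<and> key h = key g" using that by blast
    then show ?thesis unfolding rep_def by (rule someI_ex)
  qed
  define K where "K = psi ` rep ` key ` G"
  have "key ` G \<subseteq> F \<rightarrow>\<^sub>E F" using keyE by (simp add: image_subset_iff)
  moreover have "finite (F \<rightarrow>\<^sub>E F)" using F(1) by (simp add: finite_PiE)
  ultimately have "finite (key ` G)" by (rule finite_subset)
  then have "finite K" unfolding K_def by simp
  moreover have "K \<subseteq> M" unfolding K_def M_def using rep by (auto simp: image_subset_iff)
  moreover have "M \<subseteq> (\<Union>x\<in>K. Q.mball x \<epsilon>)"
  proof
    fix a assume "a \<in> M"
    then obtain g where g: "g \<in> G" "a = psi g" unfolding M_def by blast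
    define h where "h = rep (key g)"
    have h: "h \<in> G" "key h = key g" using rep g unfolding h_def by auto
    have "DG Phi h g \<le> 4 * \<delta>"
    proof (rule dg_le)
      fix \<phi> assume p: "\<phi> \<in> Phi"
      then obtain \<phi>0 where \<phi>0: "\<phi>0 \<in> F" "DPhi \<phi>0 \<phi> < \<delta>" using F by blast
      define \<phi>' where "\<phi>' = key g \<phi>0"
      have 1: "\<phi>' \<in> F" "DPhi \<phi>' (\<phi>0 \<circ> g) < \<delta>" "DPhi \<phi>' (\<phi>0 \<circ> h) < \<delta>"
        using key[OF g(1) \<phi>0(1)] key[OF h(1) \<phi>0(1)] h unfolding \<phi>'_def by auto
      have p0: "\<phi>0 \<in> Phi" "\<phi>' \<in> Phi" using \<phi>0(1) 1(1) F(2) by (auto simp: subset_iff)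
      have b: "bounded (range (\<phi> \<circ> h))" "bounded (range (\<phi>0 \<circ> h))" "bounded (range \<phi>')"
        "bounded (range (\<phi>0 \<circ> g))" "bounded (range (\<phi> \<circ> g))" "bounded (range \<phi>)" "bounded (range \<phi>0)"
        using bdd[OF comp_in[OF h(1) p]] bdd[OF comp_in[OF h(1) p0(1)]] bdd[OF p0(2)]
          bdd[OF comp_in[OF g(1) p0(1)]] bdd[OF comp_in[OF g(1) p]] bdd[OF p] bdd[OF p0(1)] by auto
      have c1: "DPhi (\<phi> \<circ> h) (\<phi>0 \<circ> h) \<le> DPhi \<phi> \<phi>0" by (rule dphi_comp[OF b(6) b(7)])
      have c2: "DPhi (\<phi>0 \<circ> g) (\<phi> \<circ> g) \<le> DPhi \<phi>0 \<phi>" by (rule dphi_comp[OF b(7) b(6)])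
      have "DPhi (\<phi> \<circ> h) (\<phi> \<circ> g) \<le> DPhi (\<phi> \<circ> h) (\<phi>0 \<circ> h) + DPhi (\<phi>0 \<circ> h) (\<phi> \<circ> g)"
        by (rule dphi_tri[OF b(1) b(2) b(5)])
      moreover have "DPhi (\<phi>0 \<circ> h) (\<phi> \<circ> g) \<le> DPhi (\<phi>0 \<circ> h) \<phi>' + DPhi \<phi>' (\<phi> \<circ> g)"
        by (rule dphi_tri[OF b(2) b(3) b(5)])
      moreover have "DPhi \<phi>' (\<phi> \<circ> g) \<le> DPhi \<phi>' (\<phi>0 \<circ> g) + DPhi (\<phi>0 \<circ> g) (\<phi> \<circ> g)"
        by (rule dphi_tri[OF b(3) b(4) b(5)])
      ultimately show "DPhi (\<phi> \<circ> h) (\<phi> \<circ> g) \<le> 4 * \<delta>"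
        using c1 c2 1 \<phi>0 dphi_sym[of \<phi> \<phi>0] dphi_sym[of "\<phi>0 \<circ> h" \<phi>'] by linarith
    qed
    then have "dq (psi h) a < \<epsilon>" using dq_psi[OF h(1) g(1)] g(2) \<open>\<epsilon> > 0\<close> unfolding \<delta>_def by simp
    moreover have "psi h \<in> K" unfolding K_def h_def using g(1) by (intro imageI)
    moreover have "psi h \<in> M" using h(1) unfolding M_def by (rule imageI)
    ultimately have "a \<in> Q.mball (psi h) \<epsilon>" using \<open>a \<in> M\<close> by simp
    then show "a \<in> (\<Union>x\<in>K. Q.mball x \<epsilon>)" using \<open>psi h \<in> K\<close> by blast
  qed
  ultimately show "\<exists>K. finite K \<and> K \<subseteq> M \<and> M \<subseteq> (\<Union>x\<in>K. Q.mball x \<epsilon>)" by blast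
qed

lemma final: "compactin (pmtop G (DG Phi)) G"
proof -
  have cs: "compactin Q.mtopology M"
    using Q.compact_space_eq_mcomplete_mtotally_bounded complete tb
    unfolding compact_space_def by simp
  have "openin (pmtop G (DG Phi)) G" unfolding openin_pmtop
    by (intro conjI subset_refl ballI exI[of _ "1::real"]) auto
  then have sub: "G \<subseteq> topspace (pmtop G (DG Phi))" by (rule openin_subset)
  show ?thesis unfolding compactin_def
  proof (intro conjI allI impI)
    show "G \<subseteq> topspace (pmtop G (DG Phi))" by (rule sub)
  next
    fix UU assume UU: "(\<forall>U\<in>UU. openin (pmtop G (DG Phi)) U) \<and> G \<subseteq> \<Union>UU"
    define VV where "VV = (\<lambda>U. psi ` U) ` UU"
    have "\<forall>V\<in>VV. openin Q.mtopology V"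
    proof
      fix V assume "V \<in> VV"
      then obtain U where U: "U \<in> UU" "V = psi ` U" unfolding VV_def by (rule imageE)
      then have "openin (pmtop G (DG Phi)) U" using UU by blast
      then have oU: "U \<subseteq> G" "\<forall>x\<in>U. \<exists>r>0. \<forall>y\<in>G. DG Phi x y < r \<longrightarrow> y \<in> U"
        by (simp_all add: openin_pmtop)
      show "openin Q.mtopology V"
        unfolding Q.openin_mtopology
      proof (intro conjI allI impI)
        show "V \<subseteq> M" using U(2) oU(1) unfolding M_def by (simp add: image_mono)
      next
        fix a assume "a \<in> V"
        then obtain u where u: "u \<in> U" "a = psi u" using U(2) by blast
        then obtain r where r: "r > 0" "\<forall>y\<in>G. DG Phi u y < r \<longrightarrow> y \<in> U" using oU(2) by blast
        have "Q.mball a r \<subseteq> V"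
        proof
          fix b assume "b \<in> Q.mball a r"
          then have b: "b \<in> M" "dq a b < r" by auto
          then obtain y where y: "y \<in> G" "b = psi y" unfolding M_def by blast
          have uG: "u \<in> G" using u(1) oU(1) by (rule rev_subsetD)
          have "DG Phi u y < r" using b(2) u(2) y dq_psi[OF uG y(1)] by simp
          then have "y \<in> U" using r y(1) by blast
          then show "b \<in> V" using y(2) U(2) by blast
        qed
        then show "\<exists>r>0. Q.mball a r \<subseteq> V" using r by blast
      qed
    qed
    moreover have "M \<subseteq> \<Union>VV"
    proof
      fix a assume "a \<in> M"
      then obtain g where g: "g \<in> G" "a = psi g" unfolding M_def by blast
      then have "g \<in> \<Union>UU" using UU by (simp add: subset_iff)
      then obtain U where U: "U \<in> UU" "g \<in> U" by (rule UnionE)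
      have "a \<in> psi ` U" using g(2) U(2) by (simp add: rev_image_eqI)
      moreover have "psi ` U \<in> VV" unfolding VV_def using U(1) by (rule imageI)
      ultimately show "a \<in> \<Union>VV" by (rule UnionI[rotated])
    qed
    ultimately have "(\<forall>V\<in>VV. openin Q.mtopology V) \<and> M \<subseteq> \<Union>VV" by (rule conjI)
    then have "\<exists>VF. finite VF \<and> VF \<subseteq> VV \<and> M \<subseteq> \<Union>VF"
      by (rule mp[OF spec[OF conjunct2[OF cs[unfolded compactin_def]]]])
    then obtain VF where VF: "finite VF" "VF \<subseteq> VV" "M \<subseteq> \<Union>VF" by (elim exE conjE)
    obtain UF where UF: "UF \<subseteq> UU" "finite UF" "VF = (\<lambda>U. psi ` U) ` UF"
      using finite_subset_image[OF VF(1) VF(2)[unfolded VV_def]] by (elim exE conjE)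
    have "G \<subseteq> \<Union>UF"
    proof
      fix g assume g: "g \<in> G"
      then have "psi g \<in> M" unfolding M_def by (rule imageI)
      then have "psi g \<in> \<Union>VF" using VF(3) by blast
      then obtain V where V: "V \<in> VF" "psi g \<in> V" by blast
      then obtain U where U0: "U \<in> UF" "V = psi ` U" using UF(3) by blast
      then obtain u where U: "U \<in> UF" "u \<in> U" "psi g = psi u" using V(2) by blast
      have "U \<in> UU" using U(1) UF(1) by blast
      then have "openin (pmtop G (DG Phi)) U" using UU by blast
      then have oU: "U \<subseteq> G" "\<forall>x\<in>U. \<exists>r>0. \<forall>y\<in>G. DG Phi x y < r \<longrightarrow> y \<in> U"
        by (simp_all add: openin_pmtop)
      then obtain r where r: "r > 0" "\<forall>y\<in>G. DG Phi u y < r \<longrightarrow> y \<in> U" using U(2) by blast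
      have uG: "u \<in> G" using U(2) oU(1) by (rule rev_subsetD)
      have "DG Phi u g = 0" using psi_eq[OF uG g] U(3) by simp
      then have "g \<in> U" using r g by simp
      then show "g \<in> \<Union>UF" using U(1) by blast
    qed
    then show "\<exists>F. finite F \<and> F \<subseteq> UU \<and> G \<subseteq> \<Union>F" using UF(1,2) by (intro exI[of _ UF] conjI)
  qed
qed

end

theorem mainTheorem6:
  fixes Phi :: "('a \<Rightarrow> real) set" and G :: "('a \<Rightarrow> 'a) set"
  assumes "Phi \<noteq> {}"
    and "\<forall>\<phi>\<in>Phi. bounded (range \<phi>)"
    and "compactin (pmtop Phi DPhi) Phi"
    and "subgroup_of G (HomeoPhi Phi)"
    and "pcomplete G (DG Phi)"
  shows "compactin (pmtop G (DG Phi)) G"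
proof -
  interpret setting Phi G using assms by unfold_locales
  show ?thesis by (rule final)
qed

end
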